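(* Let $\Omega\subset\mathbb R^d$ be a connected bounded open set and $p\in(1,+\infty)$. Suppose there exist a positive bounded Radon measure $\mu$ on $\Omega\times\Omega$ and a constant $C\in\mathbb R$ such that for all open sets $A,B\subset\Omega$ with $A\cap B=\emptyset$, $$\Phi_p(|A|)+\Phi_p(|B|)-\Phi_p(|A|+|B|)=C\big(\mu(A\times B)+\mu(B\times A)\big).$$ Then $p=2$.
   Context: For $s\in[0,|\Omega|]$, $$\Phi_p(s)=\frac{s(|\Omega|-s)}{\big((|\Omega|-s)^{1/(p-1)}+s^{1/(p-1)}\big)^{p-1}},$$ where $|\cdot|$ is Lebesgue measure. *)

theory Defs
  imports "HOL-Analysis.Analysis"
begin

text \<open>The function Phi_p on [0, |Omega|]; the parameter m stands for |Omega|.\<close>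
definition Phi :: "real \<Rightarrow> real \<Rightarrow> real \<Rightarrow> real" where
  "Phi p m s = s * (m - s) /
     ((m - s) powr (1 / (p - 1)) + s powr (1 / (p - 1))) powr (p - 1)"

end

theory Submission imports Defs "HOL-Probability.Probability" begin

lemma key_ineq:
  fixes t :: real assumes t: "t > 0" and eq: "1 + 3 powr t = 2 * 2 powr t"
  shows "t = 1"
proof (rule ccontr)
  assume nt: "t \<noteq> 1"
  define c1 where "c1 = ln (2::real)"
  define c2 where "c2 = ln (3::real) - ln 2"
  have c1: "c1 > 0" unfolding c1_def by simp
  have c2: "c2 > 0" unfolding c2_def by (simp add: ln_less_cancel_iff)
  define u where "u s = exp (- s * c1) + exp (s * c2)" for s
  define u' where "u' s = - c1 * exp (- s * c1) + c2 * exp (s * c2)" for s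
  have der: "(u has_real_derivative u' s) (at s)" for s
    unfolding u_def u'_def by (auto intro!: derivative_eq_intros)
  have cont: "continuous_on S u" for S
    unfolding u_def by (intro continuous_intros)
  have diff: "u differentiable at s" for s using der real_differentiable_def by blast
  have mono: "u' a < u' b" if "a < b" for a b
  proof -
    have "exp (- b * c1) < exp (- a * c1)" using that c1 by (simp add: mult_strict_right_mono)
    moreover have "exp (a * c2) < exp (b * c2)" using that c2 by (simp add: mult_strict_right_mono)
    then have "c1 * exp (- b * c1) < c1 * exp (- a * c1)" "c2 * exp (a * c2) < c2 * exp (b * c2)"
      using c1 c2 by simp_all
    then show ?thesis unfolding u'_def by linarith
  qed
  have u0: "u 0 = 2" unfolding u_def by simp
  have u1: "u 1 = 2" unfolding u_def c1_def c2_def by (simp add: exp_minus exp_diff)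
  have ut: "u t = 2"
  proof -
    have "exp (- t * c1) = 1 / 2 powr t" unfolding c1_def powr_def by (simp add: exp_minus field_simps)
    moreover have "exp (t * c2) = 3 powr t / 2 powr t" unfolding c2_def powr_def
      by (simp add: exp_diff algebra_simps)
    ultimately have "u t = (1 + 3 powr t) / 2 powr t" unfolding u_def by (simp add: add_divide_distrib)
    also have "\<dots> = 2" using eq by simp
    finally show ?thesis .
  qed
  have zero: "\<exists>z. a < z \<and> z < b \<and> u' z = 0" if ab: "a < b" "u a = u b" for a b
  proof -
    obtain z where z: "a < z" "z < b" "(u has_real_derivative 0) (at z)"
      using Rolle[OF ab cont diff] by blast
    have "u' z = 0" using DERIV_unique[OF der z(3)] .
    thus ?thesis using z by blast
  qed
  show False
  proof (cases "t < 1")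
    case True
    obtain z1 where "0 < z1" "z1 < t" "u' z1 = 0" using zero[of 0 t] t u0 ut by auto
    moreover obtain z2 where "t < z2" "z2 < 1" "u' z2 = 0" using zero[of t 1] True u1 ut by auto
    ultimately show False using mono[of z1 z2] by simp
  next
    case False
    then have "1 < t" using nt by simp
    obtain z1 where "0 < z1" "z1 < 1" "u' z1 = 0" using zero[of 0 1] u0 u1 by auto
    moreover obtain z2 where "1 < z2" "z2 < t" "u' z2 = 0" using zero[of 1 t] \<open>1<t\<close> u1 ut by auto
    ultimately show False using mono[of z1 z2] by simp
  qed
qed

lemma phi_vals:
  fixes p h :: real assumes p: "p > 1" and h: "h > 0"
  defines "r \<equiv> p - 1" and "t \<equiv> 1 / (p - 1)"
  shows "Phi p (4*h) h = 3 * h / (1 + 3 powr t) powr r"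
    and "Phi p (4*h) (3*h) = 3 * h / (1 + 3 powr t) powr r"
    and "Phi p (4*h) (2*h) = 2 * h / 2 powr r"
proof -
  have r: "r > 0" "t * r = 1" using p unfolding r_def t_def by auto
  have hh: "(h powr t) powr r = h" using r h by (simp add: powr_powr)
  have e1: "(3*h) powr t + h powr t = h powr t * (1 + 3 powr t)"
    using h by (simp add: powr_mult algebra_simps)
  have n3: "1 + 3 powr t > 0" by (metis add_pos_nonneg powr_ge_zero zero_less_one)
  have e1': "(h powr t * (1 + 3 powr t)) powr r = h * (1 + 3 powr t) powr r"
    using h hh n3 by (simp add: powr_mult)
  have pos3: "(1 + 3 powr t) powr r > 0" using n3 by simp
  have "Phi p (4*h) h = h * (3*h) / ((3*h) powr t + h powr t) powr r"
    unfolding Phi_def r_def t_def by simp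
  also have "\<dots> = 3 * h / (1 + 3 powr t) powr r"
    unfolding e1 e1' using h pos3 by (simp add: field_simps power2_eq_square)
  finally show "Phi p (4*h) h = 3 * h / (1 + 3 powr t) powr r" .
  have "Phi p (4*h) (3*h) = (3*h) * h / (h powr t + (3*h) powr t) powr r"
    unfolding Phi_def r_def t_def by simp
  also have "\<dots> = 3 * h / (1 + 3 powr t) powr r"
    unfolding add.commute[of "h powr t"] e1 e1' using h pos3 by (simp add: field_simps power2_eq_square)
  finally show "Phi p (4*h) (3*h) = 3 * h / (1 + 3 powr t) powr r" .
  have e2: "(2*h) powr t + (2*h) powr t = 2 * (2*h) powr t" by simp
  have e2': "(2 * (2*h) powr t) powr r = 2 powr r * (2 * h)"
    using h r by (simp add: powr_mult powr_powr)
  have "Phi p (4*h) (2*h) = (2*h) * (2*h) / ((2*h) powr t + (2*h) powr t) powr r"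
    unfolding Phi_def r_def t_def by simp
  also have "\<dots> = 2 * h / 2 powr r"
    unfolding e2 e2' using h by (simp add: field_simps)
  finally show "Phi p (4*h) (2*h) = 2 * h / 2 powr r" .
qed

lemma phi_final:
  fixes p h :: real assumes p: "p > 1" and h: "h > 0"
    and eq: "3 * Phi p (4*h) (2*h) = 4 * Phi p (4*h) h"
  shows "p = 2"
proof -
  define r where "r = p - 1"
  define t where "t = 1 / (p - 1)"
  have r: "r > 0" "t * r = 1" "t > 0" using p unfolding r_def t_def by auto
  have n3: "1 + 3 powr t > 0" by (metis add_pos_nonneg powr_ge_zero zero_less_one)
  have pos: "(1 + 3 powr t) powr r > 0" "2 powr r > 0" using n3 by auto
  from eq have "3 * (2 * h / 2 powr r) = 4 * (3 * h / (1 + 3 powr t) powr r)"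
    using phi_vals[OF p h] unfolding r_def t_def by simp
  then have "(1 + 3 powr t) powr r = 2 * 2 powr r"
    using pos h by (simp add: field_simps)
  then have "((1 + 3 powr t) powr r) powr t = (2 * 2 powr r) powr t" by simp
  then have "1 + 3 powr t = 2 powr t * 2"
    using r n3 by (simp add: powr_powr powr_mult mult.commute)
  then have "t = 1" using key_ineq[OF r(3)] by simp
  then show ?thesis unfolding t_def using p by (simp add: field_simps)
qed

lemma cdf_part:
  fixes \<Omega> :: "'a::euclidean_space set" and e :: 'a
  assumes op: "open \<Omega>" and bd: "bounded \<Omega>" and e0: "e \<noteq> 0"
  defines "F \<equiv> \<lambda>t. measure lborel (\<Omega> \<inter> {x. x \<bullet> e \<le> t})"
  shows "\<And>t. isCont F t" and "\<And>s t. s \<le> t \<Longrightarrow> F s \<le> F t"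
proof -
  have \<Omega>s: "\<Omega> \<in> sets lborel" using op by simp
  define N where "N = restrict_space lborel \<Omega>"
  define M where "M = distr N borel (\<lambda>x. x \<bullet> e)"
  have spN: "space N = \<Omega>" unfolding N_def by (simp add: space_restrict_space)
  have meas: "(\<lambda>x. x \<bullet> e) \<in> N \<rightarrow>\<^sub>M borel" unfolding N_def
    by (intro measurable_restrict_space1) simp
  have fin: "emeasure lborel \<Omega> < \<infinity>" using bd by (rule emeasure_bounded_finite)
  have mM: "measure M S = measure lborel (\<Omega> \<inter> {x. x \<bullet> e \<in> S})" if "S \<in> sets borel" for S
  proof -
    have "measure M S = measure N ((\<lambda>x. x \<bullet> e) -` S \<inter> space N)"
      unfolding M_def using meas that by (simp add: measure_distr)
    also have "\<dots> = measure lborel ((\<lambda>x. x \<bullet> e) -` S \<inter> \<Omega>)"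
      unfolding N_def spN[unfolded N_def] using \<Omega>s by (subst measure_restrict_space) auto
    finally show ?thesis by (simp add: Int_commute vimage_def)
  qed
  have "finite_borel_measure M"
  unfolding finite_borel_measure_def finite_borel_measure_axioms_def
  proof (intro conjI finite_measureI)
    show "sets M = sets borel" unfolding M_def by simp
    have "emeasure M (space M) = emeasure N ((\<lambda>x. x \<bullet> e) -` UNIV \<inter> space N)"
      unfolding M_def using meas by (simp add: emeasure_distr)
    also have "\<dots> = emeasure lborel \<Omega>" unfolding N_def spN[unfolded N_def]
      using \<Omega>s by (subst emeasure_restrict_space) auto
    finally show "emeasure M (space M) \<noteq> \<infinity>" using fin by simp
  qed
  then interpret finite_borel_measure M .
  have FM: "F = cdf M" unfolding F_def cdf_def2 by (rule ext) (subst mM, auto)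
  have null: "measure M {t} = 0" for t
  proof -
    have "measure M {t} = measure lborel (\<Omega> \<inter> {x. x \<bullet> e = t})" by (subst mM) auto
    also have "\<dots> = 0"
    proof -
      have ng: "negligible {x. e \<bullet> x = t}" using e0 by (rule negligible_hyperplane[OF disjI1])
      have cl: "closed {x. x \<bullet> e = t}" by (intro closed_Collect_eq continuous_intros)
      have "{x. x \<bullet> e = t} = {x. e \<bullet> x = t}" by (simp add: inner_commute)
      with ng cl have "{x. x \<bullet> e = t} \<in> null_sets lborel"
        by (auto simp: null_sets_completion_iff negligible_iff_null_sets)
      then have "\<Omega> \<inter> {x. x \<bullet> e = t} \<in> null_sets lborel" by (rule null_sets_subset) (use \<Omega>s cl in \<open>auto intro!: sets.Int borel_closed\<close>)
      then show ?thesis by (simp add: measure_def null_setsD1)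
    qed
    finally show ?thesis .
  qed
  show "isCont F t" for t unfolding FM using isCont_cdf null by simp
  show "F s \<le> F t" if "s \<le> t" for s t unfolding FM using cdf_nondecreasing that .
qed
lemma slab_meas:
  fixes \<Omega> :: "'a::euclidean_space set" and e :: 'a
  assumes op: "open \<Omega>" and bd: "bounded \<Omega>" and e0: "e \<noteq> 0" and st: "s \<le> t"
  shows "measure lborel (\<Omega> \<inter> {x. s < x \<bullet> e \<and> x \<bullet> e < t})
     = measure lborel (\<Omega> \<inter> {x. x \<bullet> e \<le> t}) - measure lborel (\<Omega> \<inter> {x. x \<bullet> e \<le> s})"
proof -
  have ng: "negligible {x. e \<bullet> x = t}" using e0 by (rule negligible_hyperplane[OF disjI1])
  have cl: "closed {x. x \<bullet> e = t}" by (intro closed_Collect_eq continuous_intros)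
  have "{x. x \<bullet> e = t} = {x. e \<bullet> x = t}" by (simp add: inner_commute)
  with ng cl have H: "{x. x \<bullet> e = t} \<in> null_sets lborel"
    by (auto simp: null_sets_completion_iff negligible_iff_null_sets)
  have \<Omega>s: "\<Omega> \<in> sets lborel" using op by simp
  have HN: "\<Omega> \<inter> {x. x \<bullet> e = t} \<in> null_sets lborel"
    using H by (rule null_sets_subset) (use \<Omega>s cl in \<open>auto intro!: sets.Int borel_closed\<close>)
  have fin: "emeasure lborel S \<noteq> \<infinity>" if "S \<subseteq> \<Omega>" for S
    using emeasure_bounded_finite[OF bounded_subset[OF bd that]] by simp
  let ?L = "\<Omega> \<inter> {x. x \<bullet> e \<le> s}"
  let ?S = "\<Omega> \<inter> {x. s < x \<bullet> e \<and> x \<bullet> e < t}"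
  have Ls: "?L \<in> sets lborel" using \<Omega>s by (intro sets.Int) auto
  have Ss: "?S \<in> sets lborel" using \<Omega>s by (intro sets.Int) auto
  have eq: "\<Omega> \<inter> {x. x \<bullet> e \<le> t} = (?L \<union> ?S) \<union> (\<Omega> \<inter> {x. x \<bullet> e = t})"
    using st by auto
  have "measure lborel (\<Omega> \<inter> {x. x \<bullet> e \<le> t}) = measure lborel (?L \<union> ?S)"
    unfolding eq using Ls Ss HN by (intro measure_Un_null_set) auto
  also have "\<dots> = measure lborel ?L + measure lborel ?S"
    using Ls Ss fin by (intro measure_Union) auto
  finally show ?thesis by simp
qed

theorem proposition3p9:
  fixes \<Omega> :: "'a::euclidean_space set"
    and p :: real and C :: real
    and \<mu> :: "('a \<times> 'a) measure"
  assumes "open \<Omega>" and "connected \<Omega>" and "bounded \<Omega>" and "\<Omega> \<noteq> {}"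
    and "p > 1"
    and "sets \<mu> = sets (restrict_space borel (\<Omega> \<times> \<Omega>))"
    and "finite_measure \<mu>"
    and "\<And>A B. open A \<Longrightarrow> open B \<Longrightarrow> A \<subseteq> \<Omega> \<Longrightarrow> B \<subseteq> \<Omega> \<Longrightarrow> A \<inter> B = {} \<Longrightarrow>
           Phi p (measure lborel \<Omega>) (measure lborel A)
         + Phi p (measure lborel \<Omega>) (measure lborel B)
         - Phi p (measure lborel \<Omega>) (measure lborel A + measure lborel B)
         = C * (measure \<mu> (A \<times> B) + measure \<mu> (B \<times> A))"
  shows "p = 2"
proof -
  note op = assms(1) and bd = assms(3) and ne = assms(4) and p = assms(5)
    and sm = assms(6) and fm = assms(7) and hyp = assms(8)
  define m where "m = measure lborel \<Omega>"
  define e :: 'a where "e = (SOME i. i \<in> Basis)"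
  have eB: "e \<in> Basis" unfolding e_def by (rule SOME_Basis)
  have e0: "e \<noteq> 0" using eB by auto
  define F where "F = (\<lambda>t. measure lborel (\<Omega> \<inter> {x. x \<bullet> e \<le> t}))"
  have Fc: "isCont F t" for t unfolding F_def by (rule cdf_part(1)[OF op bd e0])
  have Fm: "s \<le> t \<Longrightarrow> F s \<le> F t" for s t unfolding F_def by (rule cdf_part(2)[OF op bd e0])
  have \<Omega>s: "\<Omega> \<in> sets lborel" using op by simp
  have finO: "emeasure lborel \<Omega> < \<infinity>" using bd by (rule emeasure_bounded_finite)
  obtain R where R: "\<forall>x\<in>\<Omega>. norm x \<le> R" using bd bounded_iff by auto
  have bnd: "-R \<le> x \<bullet> e \<and> x \<bullet> e \<le> R" if "x \<in> \<Omega>" for x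
    using Basis_le_norm[OF eB, of x] R that by auto
  define t0 where "t0 = -R - 1"
  have F0: "F t0 = 0"
  proof -
    have "\<Omega> \<inter> {x. x \<bullet> e \<le> t0} = {}" using bnd unfolding t0_def by force
    then show ?thesis unfolding F_def by simp
  qed
  have FR: "F R = m"
  proof -
    have "\<Omega> \<inter> {x. x \<bullet> e \<le> R} = \<Omega>" using bnd by auto
    then show ?thesis unfolding F_def m_def by simp
  qed
  have mpos: "m > 0"
  proof -
    obtain x where x: "x \<in> \<Omega>" using ne by auto
    obtain r where r: "r > 0" "ball x r \<subseteq> \<Omega>" using op x openE by blast
    have "0 < measure lborel (ball x r)" using r by (simp add: content_ball_pos)
    also have "\<dots> \<le> m" unfolding m_def
      using r \<Omega>s finO by (intro measure_mono_fmeasurable) (auto simp: fmeasurable_def)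
    finally show ?thesis .
  qed
  define h where "h = m / 4"
  have hpos: "h > 0" using mpos unfolding h_def by simp
  have Fcon: "continuous_on {t0..R} F" using Fc by (intro continuous_at_imp_continuous_on) auto
  have t0R: "t0 \<le> R" using F0 FR mpos Fm[of R t0] by force
  have ivt: "\<exists>t. t0 \<le> t \<and> t \<le> R \<and> F t = k * h" if "0 \<le> k" "k \<le> 4" for k
  proof -
    have "F t0 \<le> k * h" "k * h \<le> F R" using F0 FR that hpos unfolding h_def by auto
    from IVT'[OF this t0R Fcon] show ?thesis by auto
  qed
  obtain t1 where t1: "t0 \<le> t1" "F t1 = 1 * h" using ivt[of 1] by auto
  obtain t2 where t2: "t0 \<le> t2" "F t2 = 2 * h" using ivt[of 2] by auto
  obtain t3 where t3: "t0 \<le> t3" "F t3 = 3 * h" using ivt[of 3] by auto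
  have lt: "a < b" if "F a < F b" for a b using Fm[of b a] that by force
  have o01: "t0 \<le> t1" "t1 \<le> t2" "t2 \<le> t3" using t1 t2 t3 hpos lt[of t1 t2] lt[of t2 t3] by auto
  define slab where "slab s t = \<Omega> \<inter> {x. s < x \<bullet> e \<and> x \<bullet> e < t}" for s t
  have slab_m: "measure lborel (slab s t) = F t - F s" if "s \<le> t" for s t
    unfolding slab_def F_def by (rule slab_meas[OF op bd e0 that])
  have slab_o: "open (slab s t)" for s t unfolding slab_def
    by (intro open_Int op open_Collect_conj open_Collect_less continuous_intros)
  have slab_s: "slab s t \<subseteq> \<Omega>" for s t unfolding slab_def by auto
  have slab_d: "slab a b \<inter> slab c d = {}" if "b \<le> c" for a b c d
    unfolding slab_def using that by auto
  define A where "A = slab t0 t1"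
  define B where "B = slab t1 t2"
  define D where "D = slab t2 t3"
  have mA: "measure lborel A = h" unfolding A_def using slab_m[OF o01(1)] t1 F0 by simp
  have mB: "measure lborel B = h" unfolding B_def using slab_m[OF o01(2)] t1 t2 by simp
  have mD: "measure lborel D = h" unfolding D_def using slab_m[OF o01(3)] t2 t3 by simp
  have oA: "open A" "open B" "open D" unfolding A_def B_def D_def using slab_o by auto
  have sA: "A \<subseteq> \<Omega>" "B \<subseteq> \<Omega>" "D \<subseteq> \<Omega>" unfolding A_def B_def D_def using slab_s by auto
  have dAB: "A \<inter> B = {}" unfolding A_def B_def by (rule slab_d) simp
  have dAD: "A \<inter> D = {}" unfolding A_def D_def using o01 by (intro slab_d) simp
  have dBD: "B \<inter> D = {}" unfolding B_def D_def by (rule slab_d) simp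
  have mAB: "measure lborel (A \<union> B) = 2 * h"
  proof -
    have "measure lborel (A \<union> B) = measure lborel A + measure lborel B"
      using oA sA dAB emeasure_bounded_finite[OF bounded_subset[OF bd sA(1)]]
        emeasure_bounded_finite[OF bounded_subset[OF bd sA(2)]]
      by (intro measure_Union) (auto simp: borel_open)
    then show ?thesis using mA mB by simp
  qed
  have msets: "X \<times> Y \<in> sets \<mu>" if "open X" "open Y" "X \<subseteq> \<Omega>" "Y \<subseteq> \<Omega>" for X Y
  proof -
    have "(\<Omega> \<times> \<Omega>) \<inter> space borel \<in> sets borel" using op by (simp add: borel_open open_Times)
    then show ?thesis unfolding sm using that
      by (subst sets_restrict_space_iff) (auto simp: borel_open open_Times)
  qed
  have add: "measure \<mu> ((X \<union> Y) \<times> Z) = measure \<mu> (X \<times> Z) + measure \<mu> (Y \<times> Z)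
           \<and> measure \<mu> (Z \<times> (X \<union> Y)) = measure \<mu> (Z \<times> X) + measure \<mu> (Z \<times> Y)"
    if "open X" "open Y" "open Z" "X \<subseteq> \<Omega>" "Y \<subseteq> \<Omega>" "Z \<subseteq> \<Omega>" "X \<inter> Y = {}" for X Y Z
  proof -
    have "(X \<union> Y) \<times> Z = X \<times> Z \<union> Y \<times> Z" "Z \<times> (X \<union> Y) = Z \<times> X \<union> Z \<times> Y" by auto
    moreover have "measure \<mu> (X \<times> Z \<union> Y \<times> Z) = measure \<mu> (X \<times> Z) + measure \<mu> (Y \<times> Z)"
      using that by (intro finite_measure.finite_measure_Union[OF fm] msets) auto
    moreover have "measure \<mu> (Z \<times> X \<union> Z \<times> Y) = measure \<mu> (Z \<times> X) + measure \<mu> (Z \<times> Y)"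
      using that by (intro finite_measure.finite_measure_Union[OF fm] msets) auto
    ultimately show ?thesis by simp
  qed
  have m4: "measure lborel \<Omega> = 4 * h" unfolding h_def m_def by simp
  have hh: "h + h = 2 * h" "2 * h + h = 3 * h" by simp_all
  note hh2 = hh(2)
  have h1: "Phi p (4*h) h + Phi p (4*h) h - Phi p (4*h) (2*h)
      = C * (measure \<mu> (A \<times> D) + measure \<mu> (D \<times> A))"
    using hyp[OF oA(1) oA(3) sA(1) sA(3) dAD] unfolding mA mD m4 hh(1) .
  have h2: "Phi p (4*h) h + Phi p (4*h) h - Phi p (4*h) (2*h)
      = C * (measure \<mu> (B \<times> D) + measure \<mu> (D \<times> B))"
    using hyp[OF oA(2) oA(3) sA(2) sA(3) dBD] unfolding mB mD m4 hh(1) .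
  have dABD: "(A \<union> B) \<inter> D = {}" using dAD dBD by auto
  have h3: "Phi p (4*h) (2*h) + Phi p (4*h) h - Phi p (4*h) (3*h)
      = C * (measure \<mu> ((A \<union> B) \<times> D) + measure \<mu> (D \<times> (A \<union> B)))"
    using hyp[OF open_Un[OF oA(1) oA(2)] oA(3) _ sA(3) dABD] sA unfolding mAB mD m4 hh2 by simp
  have ad: "measure \<mu> ((A \<union> B) \<times> D) + measure \<mu> (D \<times> (A \<union> B))
     = (measure \<mu> (A \<times> D) + measure \<mu> (D \<times> A)) + (measure \<mu> (B \<times> D) + measure \<mu> (D \<times> B))"
    using add[OF oA(1) oA(2) oA(3) sA dAB] by simp
  have "Phi p (4*h) (2*h) + Phi p (4*h) h - Phi p (4*h) (3*h)
     = 2 * (2 * Phi p (4*h) h - Phi p (4*h) (2*h))"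
  proof -
    have "C * (measure \<mu> ((A \<union> B) \<times> D) + measure \<mu> (D \<times> (A \<union> B)))
       = C * (measure \<mu> (A \<times> D) + measure \<mu> (D \<times> A)) + C * (measure \<mu> (B \<times> D) + measure \<mu> (D \<times> B))"
      unfolding ad by (simp add: distrib_left)
    then show ?thesis using h1 h2 h3 by (smt (verit))
  qed
  moreover have "Phi p (4*h) (3*h) = Phi p (4*h) h" using phi_vals[OF p hpos] by simp
  ultimately have "3 * Phi p (4*h) (2*h) = 4 * Phi p (4*h) h" by simp
  then show ?thesis by (rule phi_final[OF p hpos])
qed

end
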